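(* Every transitive compact dynamical system $(X,T)$ is Li-Yorke chaotic.
   Context: A dynamical system $(X,T)$: $X$ is a compact metric space (metric $d$) with more than one point and without isolated points, $T:X\to X$ a continuous surjection. "Opene" means open and nonempty. $N_T(U,V)=\{n\in\mathbb{Z}_+:U\cap T^{-n}V\neq\varnothing\}$; $\mathcal{N}_T$ is the family of all subsets of $\mathbb{Z}_+$ containing some $N_T(U,V)$ with $U,V$ opene; $\omega_{\mathcal{N}_T}(x)=\bigcap_{F\in\mathcal{N}_T}\overline{\{T^ix:i\in F\}}$; $(X,T)$ is transitive compact if $\omega_{\mathcal{N}_T}(x)\neq\varnothing$ for all $x\in X$. A pair $(x,y)$ is proximal if $\liminf_{n\to\infty}d(T^nx,T^ny)=0$ and asymptotic if $\lim_{n\to\infty}d(T^nx,T^ny)=0$. $(X,T)$ is Li-Yorke chaotic if there exists an uncountable set $S\subset X$ such that every pair $(x,y)\in S\times S$ with $x\neq y$ is proximal but not asymptotic. *)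

theory Defs
  imports "HOL-Analysis.Analysis" "HOL-Library.Liminf_Limsup"
begin

definition dyn_system :: "'a::metric_space set \<Rightarrow> ('a \<Rightarrow> 'a) \<Rightarrow> bool" where
  "dyn_system X T \<longleftrightarrow> compact X \<and> (\<exists>x\<in>X. \<exists>y\<in>X. x \<noteq> y)
     \<and> (\<forall>x\<in>X. x islimpt X) \<and> continuous_on X T \<and> T ` X = X"

definition opene :: "'a::metric_space set \<Rightarrow> 'a set \<Rightarrow> bool" where
  "opene X U \<longleftrightarrow> openin (top_of_set X) U \<and> U \<noteq> {}"

definition hitting_times :: "'a set \<Rightarrow> ('a \<Rightarrow> 'a) \<Rightarrow> 'a set \<Rightarrow> 'a set \<Rightarrow> nat set" where
  "hitting_times X T U V = {n. U \<inter> {x\<in>X. (T^^n) x \<in> V} \<noteq> {}}"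

definition family_N :: "'a::metric_space set \<Rightarrow> ('a \<Rightarrow> 'a) \<Rightarrow> nat set set" where
  "family_N X T = {F. \<exists>U V. opene X U \<and> opene X V \<and> hitting_times X T U V \<subseteq> F}"

definition omega_N :: "'a::metric_space set \<Rightarrow> ('a \<Rightarrow> 'a) \<Rightarrow> 'a \<Rightarrow> 'a set" where
  "omega_N X T x = (\<Inter>F\<in>family_N X T. closure {(T^^i) x | i. i \<in> F})"

definition transitive_compact :: "'a::metric_space set \<Rightarrow> ('a \<Rightarrow> 'a) \<Rightarrow> bool" where
  "transitive_compact X T \<longleftrightarrow> (\<forall>x\<in>X. omega_N X T x \<noteq> {})"

definition proximal :: "('a::metric_space \<Rightarrow> 'a) \<Rightarrow> 'a \<Rightarrow> 'a \<Rightarrow> bool" where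
  "proximal T x y \<longleftrightarrow> liminf (\<lambda>n. ereal (dist ((T^^n) x) ((T^^n) y))) = 0"

definition asymptotic :: "('a::metric_space \<Rightarrow> 'a) \<Rightarrow> 'a \<Rightarrow> 'a \<Rightarrow> bool" where
  "asymptotic T x y \<longleftrightarrow> (\<lambda>n. dist ((T^^n) x) ((T^^n) y)) \<longlonglongrightarrow> 0"

definition li_yorke_chaotic :: "'a::metric_space set \<Rightarrow> ('a \<Rightarrow> 'a) \<Rightarrow> bool" where
  "li_yorke_chaotic X T \<longleftrightarrow> (\<exists>S\<subseteq>X. uncountable S \<and>
     (\<forall>x\<in>S. \<forall>y\<in>S. x \<noteq> y \<longrightarrow> proximal T x y \<and> \<not> asymptotic T x y))"

end

theory Submission
  imports Defs
begin

lemma funpow_in: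
  assumes "T ` X = X" "x \<in> X" shows "(T^^n) x \<in> X"
  using assms by (induction n) auto

lemma funpow_image:
  assumes "T ` X = X" shows "(T^^n) ` X = X"
proof (induction n)
  case 0 then show ?case by simp
next
  case (Suc n)
  have "(T^^Suc n) ` X = T ` ((T^^n) ` X)" by (simp add: image_comp)
  then show ?case using Suc assms by simp
qed

lemma funpow_cont:
  assumes "T ` X = X" "continuous_on X T" shows "continuous_on X (T^^n)"
proof (induction n)
  case 0 then show ?case by (simp add: continuous_on_id)
next
  case (Suc n)
  have "continuous_on X (T \<circ> (T^^n))"
    using continuous_on_compose[OF Suc] assms funpow_image[OF assms(1), of n]
    by simp
  then show ?case by simp
qed

lemma baire_X:
  fixes X :: "'a::metric_space set"
  assumes "compact X" "X \<noteq> {}" "countable G"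
    and op: "\<And>A. A \<in> G \<Longrightarrow> openin (top_of_set X) A"
    and dn: "\<And>A x e. A \<in> G \<Longrightarrow> x \<in> X \<Longrightarrow> e > 0 \<Longrightarrow> \<exists>y\<in>A. dist y x < e"
  shows "\<exists>y\<in>X. \<forall>A\<in>G. y \<in> A"
proof -
  let ?G = "insert X G"
  have cs: "compact_space (top_of_set X)"
    using assms(1) by (simp add: compact_space_subtopology compactin_euclidean_iff)
  have reg: "regular_space (top_of_set X)"
    by (simp add: regular_space_euclidean regular_space_subtopology)
  have "top_of_set X closure_of \<Inter>?G = topspace (top_of_set X)"
  proof (rule Baire_category)
    show "completely_metrizable_space (top_of_set X) \<or>
      locally_compact_space (top_of_set X) \<and> regular_space (top_of_set X)"
      using cs reg compact_imp_locally_compact_space by blast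
    show "countable ?G" using assms by simp
    fix A assume A: "A \<in> ?G"
    show "openin (top_of_set X) A \<and> top_of_set X closure_of A = topspace (top_of_set X)"
    proof
      show "openin (top_of_set X) A" using A op by auto
      then have AX: "A \<subseteq> X" by (meson openin_imp_subset)
      have "X \<subseteq> closure A"
      proof
        fix x assume "x \<in> X"
        then show "x \<in> closure A"
          unfolding closure_approachable using A dn by (metis dist_self insertE)
      qed
      then show "top_of_set X closure_of A = topspace (top_of_set X)"
        using AX by (auto simp: closure_of_subtopology Int_absorb1)
    qed
  qed
  then have "\<Inter>?G \<noteq> {}" using assms(2) by auto
  then show ?thesis by auto
qed


lemma key:
  fixes X :: "'a::metric_space set" and T :: "'a \<Rightarrow> 'a"
  assumes ds: "dyn_system X T" and tc: "transitive_compact X T" and s: "s \<in> X"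
  shows "\<exists>z\<in>X. \<forall>k p r x e. p \<in> X \<longrightarrow> r > 0 \<longrightarrow> x \<in> X \<longrightarrow> e > 0 \<longrightarrow>
     (\<exists>y\<in>X. dist y x < e \<and> (\<exists>n\<ge>k. dist ((T^^n) y) p < r \<and> dist ((T^^n) s) ((T^^k) z) < r))"
proof -
  have cX: "compact X" and img: "T ` X = X" and cT: "continuous_on X T" and ne: "X \<noteq> {}"
    using ds unfolding dyn_system_def by auto
  obtain z where z: "z \<in> omega_N X T s"
    using tc s unfolding transitive_compact_def by blast
  have zF: "z \<in> closure {(T^^i) s | i. i \<in> hitting_times X T U V}" if "opene X U" "opene X V" for U V
    using z that unfolding omega_N_def family_N_def by blast
  have oX: "opene X X" using ne by (simp add: opene_def)
  have "{(T^^i) s | i. i \<in> hitting_times X T X X} \<subseteq> X"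
    using funpow_in[OF img s] by auto
  then have "closure {(T^^i) s | i. i \<in> hitting_times X T X X} \<subseteq> X"
    using cX by (simp add: closure_minimal compact_imp_closed)
  then have zX: "z \<in> X" using zF[OF oX oX] by blast
  have main: "\<exists>y\<in>X. dist y x < e \<and> (\<exists>n\<ge>k. dist ((T^^n) y) p < r \<and> dist ((T^^n) s) ((T^^k) z) < r)"
    if p: "p \<in> X" and r: "r > 0" and x: "x \<in> X" and e: "e > 0" for k p x and r e :: real
  proof -
    have ck: "continuous_on X (T^^k)" using funpow_cont[OF img cT] .
    then obtain d where d: "d > 0" and dd: "\<And>w. w \<in> X \<Longrightarrow> dist w z < d \<Longrightarrow> dist ((T^^k) w) ((T^^k) z) < r"
      using zX r unfolding continuous_on_iff by metis
    define U where "U = X \<inter> ball x e"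
    define V where "V = X \<inter> (T^^k) -` ball p r"
    have oU: "opene X U" unfolding opene_def U_def using x e
      by (auto intro: openin_open_Int)
    obtain w where w: "w \<in> X" "(T^^k) w = p" using p funpow_image[OF img, of k] by force
    have oV: "opene X V" unfolding opene_def V_def
      using continuous_openin_preimage_gen[OF ck, of "ball p r"] w r by auto
    obtain y' where y': "y' \<in> {(T^^i) s | i. i \<in> hitting_times X T U V}" "dist y' z < d"
      using zF[OF oU oV] d unfolding closure_approachable by blast
    then obtain i where i: "i \<in> hitting_times X T U V" "y' = (T^^i) s" by blast
    then obtain u where u: "u \<in> U" "u \<in> X" "(T^^i) u \<in> V" unfolding hitting_times_def by blast
    have e1: "(T^^(k+i)) u = (T^^k) ((T^^i) u)" by (simp add: funpow_add)
    have e2: "(T^^(k+i)) s = (T^^k) ((T^^i) s)" by (simp add: funpow_add)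
    have "dist u x < e" using u(1) by (simp add: U_def dist_commute)
    moreover have "dist ((T^^(k+i)) u) p < r" using u(3) e1 by (simp add: V_def dist_commute)
    moreover have "dist ((T^^(k+i)) s) ((T^^k) z) < r" using e2 dd[of "(T^^i) s"] y' i funpow_in[OF img s] by simp
    ultimately show "\<exists>y\<in>X. dist y x < e \<and> (\<exists>n\<ge>k. dist ((T^^n) y) p < r \<and> dist ((T^^n) s) ((T^^k) z) < r)"
      using u(2) le_add1 by blast
  qed
  show ?thesis using main zX by blast
qed


lemma dense_prox:
  fixes X :: "'a::metric_space set" and T :: "'a \<Rightarrow> 'a"
  assumes ds: "dyn_system X T" and tc: "transitive_compact X T" and s: "s \<in> X"
    and x: "x \<in> X" and e: "e > 0" and eps: "\<epsilon> > 0"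
  shows "\<exists>y\<in>X. dist y x < e \<and> (\<exists>n\<ge>k. dist ((T^^n) y) ((T^^n) s) < \<epsilon>)"
proof -
  have img: "T ` X = X" using ds unfolding dyn_system_def by auto
  obtain z where zX: "z \<in> X" and z: "\<And>k p r x e. p \<in> X \<Longrightarrow> r > 0 \<Longrightarrow> x \<in> X \<Longrightarrow> e > 0 \<Longrightarrow>
     (\<exists>y\<in>X. dist y x < e \<and> (\<exists>n\<ge>k. dist ((T^^n) y) p < r \<and> dist ((T^^n) s) ((T^^k) z) < r))"
    using key[OF ds tc s] by blast
  have "(T^^k) z \<in> X" using funpow_in[OF img zX] .
  from z[OF this _ x e, of "\<epsilon>/2" k] eps obtain y n where
    "y \<in> X" "dist y x < e" "n \<ge> k" "dist ((T^^n) y) ((T^^k) z) < \<epsilon>/2" "dist ((T^^n) s) ((T^^k) z) < \<epsilon>/2"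
    by auto
  then show ?thesis using dist_triangle_half_l by blast
qed

lemma dense_far:
  fixes X :: "'a::metric_space set" and T :: "'a \<Rightarrow> 'a"
  assumes ds: "dyn_system X T" and tc: "transitive_compact X T" and s: "s \<in> X"
    and x: "x \<in> X" and e: "e > 0" and a: "a \<in> X" and b: "b \<in> X" and ab: "dist a b = 4 * \<delta>"
    and dl: "\<delta> > 0"
  shows "\<exists>y\<in>X. dist y x < e \<and> (\<exists>n\<ge>k. dist ((T^^n) y) ((T^^n) s) > \<delta>)"
proof -
  have img: "T ` X = X" using ds unfolding dyn_system_def by auto
  obtain z where zX: "z \<in> X" and z: "\<And>k p r x e. p \<in> X \<Longrightarrow> r > 0 \<Longrightarrow> x \<in> X \<Longrightarrow> e > 0 \<Longrightarrow>
     (\<exists>y\<in>X. dist y x < e \<and> (\<exists>n\<ge>k. dist ((T^^n) y) p < r \<and> dist ((T^^n) s) ((T^^k) z) < r))"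
    using key[OF ds tc s] by blast
  define c where "c = (T^^k) z"
  have "dist a b \<le> dist a c + dist b c" using dist_triangle[of a b c] by (simp add: dist_commute)
  then obtain p where p: "p \<in> X" "dist p c \<ge> 2 * \<delta>"
  proof (cases "dist a c \<ge> 2 * \<delta>")
    case True then show ?thesis using that a by blast
  next
    case False
    then have "dist b c \<ge> 2 * \<delta>" using \<open>dist a b \<le> dist a c + dist b c\<close> ab by linarith
    then show ?thesis using that b by blast
  qed
  from z[OF p(1) _ x e, of "\<delta>/2" k] dl obtain y n where
    y: "y \<in> X" "dist y x < e" "n \<ge> k" "dist ((T^^n) y) p < \<delta>/2" "dist ((T^^n) s) c < \<delta>/2"
    unfolding c_def by auto
  have "dist p c \<le> dist p ((T^^n) y) + dist ((T^^n) y) ((T^^n) s) + dist ((T^^n) s) c"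
    using dist_triangle[of p c "(T^^n) y"] dist_triangle[of "(T^^n) y" c "(T^^n) s"] by linarith
  then have "dist ((T^^n) y) ((T^^n) s) > \<delta>" using y p by (simp add: dist_commute)
  then show ?thesis using y by blast
qed

lemma liminf_zero:
  fixes f :: "nat \<Rightarrow> real"
  assumes nn: "\<And>n. f n \<ge> 0" and sm: "\<And>k. \<exists>n\<ge>k. f n < 1 / (real k + 1)"
  shows "liminf (\<lambda>n. ereal (f n)) = 0"
proof (rule antisym)
  show "0 \<le> liminf (\<lambda>n. ereal (f n))"
    by (rule Liminf_bounded) (simp add: nn)
  show "liminf (\<lambda>n. ereal (f n)) \<le> 0"
    unfolding liminf_SUP_INF
  proof (rule SUP_least)
    fix m
    let ?I = "Inf ((\<lambda>n. ereal (f n)) ` {m..})"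
    have b: "?I \<le> ereal (1 / (real k + 1))" for k
    proof -
      obtain n where n: "n \<ge> max m k" "f n < 1 / (real (max m k) + 1)" using sm by blast
      have "1 / (real (max m k) + 1) \<le> 1 / (real k + 1)"
        by (intro divide_left_mono) auto
      then have "ereal (f n) \<le> ereal (1 / (real k + 1))" using n by simp
      moreover have "?I \<le> ereal (f n)" using n by (intro INF_lower) auto
      ultimately show ?thesis by (rule order_trans[rotated])
    qed
    show "?I \<le> 0"
    proof (rule ereal_le_epsilon2)
      fix e :: real assume "e > 0"
      then obtain k where "inverse (real (Suc k)) < e" using reals_Archimedean by blast
      then have "1 / (real k + 1) < e" by (simp add: inverse_eq_divide add.commute)
      then have "ereal (1 / (real k + 1)) \<le> 0 + ereal e" by simp
      then show "?I \<le> 0 + ereal e" using b[of k] by (rule order_trans[rotated])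
    qed
  qed
qed


lemma openin_near:
  fixes X :: "'a::metric_space set" and T :: "'a \<Rightarrow> 'a"
  assumes img: "T ` X = X" and cT: "continuous_on X T" and op: "\<And>c. open {y. P c y}"
  shows "openin (top_of_set X) {y\<in>X. \<exists>n\<ge>k. P ((T^^n) s) ((T^^n) y)}"
proof -
  have eq: "{y\<in>X. \<exists>n\<ge>k. P ((T^^n) s) ((T^^n) y)} = (\<Union>n\<in>{k..}. X \<inter> (T^^n) -` {y. P ((T^^n) s) y})"
    by auto
  have o: "openin (top_of_set X) (X \<inter> (T^^n) -` {y. P ((T^^n) s) y})" for n
    by (rule continuous_openin_preimage_gen[OF funpow_cont[OF img cT] op])
  show ?thesis unfolding eq
    by (rule openin_Union) (use o in blast)
qed

theorem proposition6p6:
  fixes X :: "'a::metric_space set" and T :: "'a \<Rightarrow> 'a"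
  assumes "dyn_system X T" and "transitive_compact X T"
  shows "li_yorke_chaotic X T"
proof -
  note ds = assms(1) and tc = assms(2)
  have cX: "compact X" and img: "T ` X = X" and cT: "continuous_on X T"
    and lp: "\<And>x. x \<in> X \<Longrightarrow> x islimpt X"
    using ds unfolding dyn_system_def by auto
  obtain a b where a: "a \<in> X" and b: "b \<in> X" and ab: "a \<noteq> b"
    using ds unfolding dyn_system_def by blast
  define \<delta> where "\<delta> = dist a b / 4"
  have dl: "\<delta> > 0" and ab4: "dist a b = 4 * \<delta>" using ab by (auto simp: \<delta>_def)
  define good where "good x y \<longleftrightarrow> proximal T x y \<and> \<not> asymptotic T x y" for x y
  define \<A> where "\<A> = {S. S \<subseteq> X \<and> (\<forall>x\<in>S. \<forall>y\<in>S. x \<noteq> y \<longrightarrow> good x y)}"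
  have "\<forall>C\<in>chains \<A>. \<Union>C \<in> \<A>"
  proof
    fix C assume C: "C \<in> chains \<A>"
    then have CA: "C \<subseteq> \<A>" and ch: "\<And>S S'. S \<in> C \<Longrightarrow> S' \<in> C \<Longrightarrow> S \<subseteq> S' \<or> S' \<subseteq> S"
      unfolding chains_def chain_subset_def by auto
    show "\<Union>C \<in> \<A>"
      unfolding \<A>_def
    proof (intro CollectI conjI ballI impI)
      show "\<Union>C \<subseteq> X" using CA unfolding \<A>_def by auto
      fix x y assume x: "x \<in> \<Union>C" and y: "y \<in> \<Union>C" and xy: "x \<noteq> y"
      then obtain S S' where S: "S \<in> C" "x \<in> S" and S': "S' \<in> C" "y \<in> S'" by blast
      from ch[OF S(1) S'(1)] show "good x y"
      proof
        assume "S \<subseteq> S'" then show ?thesis using CA S S' xy unfolding \<A>_def by blast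
      next
        assume "S' \<subseteq> S" then show ?thesis using CA S S' xy unfolding \<A>_def by blast
      qed
    qed
  qed
  from Zorn_Lemma[OF this] obtain M where MA: "M \<in> \<A>" and Mmax: "\<And>S. S \<in> \<A> \<Longrightarrow> M \<subseteq> S \<Longrightarrow> S = M"
    by blast
  have MX: "M \<subseteq> X" using MA unfolding \<A>_def by auto
  have "uncountable M"
  proof
    assume cM: "countable M"
    define P where "P = (\<lambda>(s,k). {y\<in>X. \<exists>n\<ge>k. dist ((T^^n) s) ((T^^n) y) < 1 / (real k + 1)})"
    define Q where "Q = (\<lambda>(s,k). {y\<in>X. \<exists>n\<ge>k. \<delta> < dist ((T^^n) s) ((T^^n) y)})"
    define R where "R = (\<lambda>s. X - {s})"
    define G where "G = P ` (M \<times> UNIV) \<union> Q ` (M \<times> UNIV) \<union> R ` M"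
    have cG: "countable G" unfolding G_def using cM by auto
    have "\<exists>y\<in>X. \<forall>A\<in>G. y \<in> A"
    proof (rule baire_X[OF cX _ cG])
      show "X \<noteq> {}" using a by blast
      fix A assume A: "A \<in> G"
      show "openin (top_of_set X) A"
        using A unfolding G_def
      proof (elim UnE imageE)
        fix sk assume "A = P sk"
        then show ?thesis unfolding P_def
          using openin_near[OF img cT, of "\<lambda>c y. dist c y < 1 / (real (snd sk) + 1)" "snd sk" "fst sk"]
          by (auto simp: case_prod_beta open_ball[unfolded ball_def])
      next
        fix sk assume "A = Q sk"
        have "open {y. \<delta> < dist c y}" for c
          using open_Compl[OF closed_cball[of c \<delta>]] by (simp add: cball_def Compl_eq not_le)
        then show ?thesis unfolding P_def \<open>A = Q sk\<close> Q_def
          using openin_near[OF img cT, of "\<lambda>c y. \<delta> < dist c y" "snd sk" "fst sk"]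
          by (auto simp: case_prod_beta)
      next
        fix s assume "A = R s"
        have "openin (top_of_set X) (X \<inter> - {s})"
          by (intro openin_open_Int) auto
        then show ?thesis unfolding \<open>A = R s\<close> R_def by (simp add: Diff_eq)
      qed
    next
      fix A x and e :: real assume A: "A \<in> G" and x: "x \<in> X" and e: "e > 0"
      show "\<exists>y\<in>A. dist y x < e"
        using A unfolding G_def
      proof (elim UnE imageE)
        fix sk assume Ask: "A = P sk" "sk \<in> M \<times> UNIV"
        obtain s k where sk: "sk = (s,k)" by force
        have s: "s \<in> X" using Ask MX sk by auto
        obtain y n where yy: "y \<in> X" "dist y x < e" "n \<ge> k" and d: "dist ((T^^n) y) ((T^^n) s) < 1 / (real k + 1)"
          using dense_prox[OF ds tc s x e, of "1 / (real k + 1)" k] by auto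
        have "dist ((T^^n) s) ((T^^n) y) < 1 / (real k + 1)" using d by (simp only: dist_commute)
        then have "y \<in> P (s,k)" unfolding P_def using yy by blast
        then show ?thesis unfolding Ask sk using yy by blast
      next
        fix sk assume Ask: "A = Q sk" "sk \<in> M \<times> UNIV"
        obtain s k where sk: "sk = (s,k)" by force
        have s: "s \<in> X" using Ask MX sk by auto
        obtain y n where yy: "y \<in> X" "dist y x < e" "n \<ge> k" and d: "dist ((T^^n) y) ((T^^n) s) > \<delta>"
          using dense_far[OF ds tc s x e a b ab4 dl, of k] by auto
        have "\<delta> < dist ((T^^n) s) ((T^^n) y)" using d by (simp only: dist_commute)
        then have "y \<in> Q (s,k)" unfolding Q_def using yy by blast
        then show ?thesis unfolding Ask sk using yy by blast
      next
        fix s assume As: "A = R s"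
        show ?thesis
        proof (cases "x = s")
          case False then show ?thesis using x e unfolding As R_def by (metis DiffI dist_self empty_iff insert_iff)
        next
          case True
          then obtain y where "y \<in> X" "y \<noteq> s" "dist y x < e"
            using lp[OF x] e unfolding islimpt_approachable by blast
          then show ?thesis unfolding As R_def by auto
        qed
      qed
    qed
    then obtain y where yX: "y \<in> X" and yG: "\<And>A. A \<in> G \<Longrightarrow> y \<in> A" by blast
    have gy: "good s y \<and> good y s" if s: "s \<in> M" for s
    proof -
      have h1: "\<exists>n\<ge>k. dist ((T^^n) s) ((T^^n) y) < 1 / (real k + 1)" for k
      proof -
        have "P (s,k) \<in> G" using s unfolding G_def by blast
        then have "y \<in> P (s,k)" by (rule yG)
        then show ?thesis unfolding P_def by simp
      qed
      have h2: "\<exists>n\<ge>k. \<delta> < dist ((T^^n) s) ((T^^n) y)" for k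
      proof -
        have "Q (s,k) \<in> G" using s unfolding G_def by blast
        then have "y \<in> Q (s,k)" by (rule yG)
        then show ?thesis unfolding Q_def by simp
      qed
      have pr1: "proximal T s y"
        unfolding proximal_def by (rule liminf_zero) (simp, rule h1)
      have "(\<lambda>n. ereal (dist ((T^^n) y) ((T^^n) s))) = (\<lambda>n. ereal (dist ((T^^n) s) ((T^^n) y)))"
        by (simp add: dist_commute)
      then have pr2: "proximal T y s" using pr1 unfolding proximal_def by simp
      note pr = pr1 pr2
      have nas: "\<not> (\<lambda>n. dist ((T^^n) s) ((T^^n) y)) \<longlonglongrightarrow> 0"
      proof
        assume "(\<lambda>n. dist ((T^^n) s) ((T^^n) y)) \<longlonglongrightarrow> 0"
        then obtain N where N: "\<And>n. n \<ge> N \<Longrightarrow> dist (dist ((T^^n) s) ((T^^n) y)) 0 < \<delta>"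
          using dl unfolding lim_sequentially by blast
        obtain n where "n \<ge> N" "\<delta> < dist ((T^^n) s) ((T^^n) y)" using h2 by blast
        with N[of n] show False by simp
      qed
      then have "\<not> asymptotic T s y" "\<not> asymptotic T y s"
        unfolding asymptotic_def by (auto simp: dist_commute)
      then show ?thesis using pr unfolding good_def by blast
    qed
    have yM: "y \<notin> M"
    proof
      assume "y \<in> M"
      then have "y \<in> R y" using yG unfolding G_def by blast
      then show False unfolding R_def by simp
    qed
    have "insert y M \<in> \<A>"
      unfolding \<A>_def
    proof (intro CollectI conjI ballI impI)
      show "insert y M \<subseteq> X" using MX yX by blast
      fix u v assume u: "u \<in> insert y M" and v: "v \<in> insert y M" and uv: "u \<noteq> v"
      show "good u v"
      proof (cases "u = y")
        case True
        then have "v \<in> M" using v uv by blast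
        then show ?thesis using gy True by blast
      next
        case False
        then have uM: "u \<in> M" using u by blast
        show ?thesis
        proof (cases "v = y")
          case True then show ?thesis using gy uM by blast
        next
          case False
          then have "v \<in> M" using v by blast
          then show ?thesis using MA uM uv unfolding \<A>_def by blast
        qed
      qed
    qed
    then have "insert y M = M" using Mmax by blast
    then show False using yM by blast
  qed
  moreover have "\<forall>x\<in>M. \<forall>y\<in>M. x \<noteq> y \<longrightarrow> proximal T x y \<and> \<not> asymptotic T x y"
    using MA unfolding \<A>_def good_def by blast
  ultimately show ?thesis
    unfolding li_yorke_chaotic_def using MX by blast
qed

end
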